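(* Let $G$ be a connected graph on $n$ vertices with maximum degree $\Delta\ge1$. Then $G$ contains a forest $F$ and disjoint vertex sets $A_0,A_1\subseteq V(G)$ such that (i) $A_0\cup A_1$ is an independent set in $G$; (ii) $d_F(v)=d_G(v)$ for all $v\in A_0$; (iii) $d_F(v)\ge d_G(v)-1$ for all $v\in A_1$; (iv) $|A_0|+\frac12|A_1|\ge \gamma_\Delta n$, where \[\gamma_\Delta=\frac{1}{\Delta^2+\Delta+2}+\frac{3}{2(\Delta^2+2\Delta+3)}.\]
   Context: $d_F(v)$ and $d_G(v)$ denote the degree of $v$ in $F$ and in $G$ respectively. *)

theory Defs
  imports Complex_Main
begin

definition simple_graph :: "'a set \<Rightarrow> 'a set set \<Rightarrow> bool" where
  "simple_graph V E \<longleftrightarrow> finite V \<and> (\<forall>e\<in>E. e \<subseteq> V \<and> card e = 2)"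

definition degree :: "'a set set \<Rightarrow> 'a \<Rightarrow> nat" where
  "degree E v = card {e \<in> E. v \<in> e}"

definition max_degree :: "'a set \<Rightarrow> 'a set set \<Rightarrow> nat" where
  "max_degree V E = Max (degree E ` V)"

definition is_walk :: "'a set \<Rightarrow> 'a set set \<Rightarrow> 'a list \<Rightarrow> bool" where
  "is_walk V E xs \<longleftrightarrow> xs \<noteq> [] \<and> set xs \<subseteq> V \<and>
     (\<forall>i. Suc i < length xs \<longrightarrow> {xs ! i, xs ! Suc i} \<in> E)"

definition connected_graph :: "'a set \<Rightarrow> 'a set set \<Rightarrow> bool" where
  "connected_graph V E \<longleftrightarrow> V \<noteq> {} \<and>
     (\<forall>u\<in>V. \<forall>v\<in>V. \<exists>xs. is_walk V E xs \<and> hd xs = u \<and> last xs = v)"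

definition is_cycle :: "'a set set \<Rightarrow> 'a list \<Rightarrow> bool" where
  "is_cycle E xs \<longleftrightarrow> length xs \<ge> 3 \<and> distinct xs \<and>
     (\<forall>i. Suc i < length xs \<longrightarrow> {xs ! i, xs ! Suc i} \<in> E) \<and>
     {last xs, hd xs} \<in> E"

definition acyclic_edges :: "'a set set \<Rightarrow> bool" where
  "acyclic_edges E \<longleftrightarrow> (\<nexists>xs. is_cycle E xs)"

definition forest_in :: "'a set \<Rightarrow> 'a set set \<Rightarrow> 'a set set \<Rightarrow> bool" where
  "forest_in V E F \<longleftrightarrow> F \<subseteq> E \<and> acyclic_edges F"

definition independent_set :: "'a set set \<Rightarrow> 'a set \<Rightarrow> bool" where
  "independent_set E S \<longleftrightarrow> (\<forall>u\<in>S. \<forall>v\<in>S. {u, v} \<notin> E)"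

definition gamma :: "nat \<Rightarrow> real" where
  "gamma D = 1 / (real D ^ 2 + real D + 2) + 3 / (2 * (real D ^ 2 + 2 * real D + 3))"

end

theory Submission
  imports Defs
begin

definition nb :: "'a set set \<Rightarrow> 'a \<Rightarrow> 'a set" where
  "nb E v = {u. {v,u} \<in> E}"

definition NA :: "'a set set \<Rightarrow> 'a set \<Rightarrow> 'a set \<Rightarrow> 'a set" where
  "NA E V A = {x \<in> V - A. \<exists>a\<in>A. {a,x} \<in> E}"

definition config :: "'a set \<Rightarrow> 'a set set \<Rightarrow> 'a set set \<Rightarrow> 'a set \<Rightarrow> 'a set \<Rightarrow> bool" where
  "config V E F A0 A1 \<longleftrightarrow> F \<subseteq> E \<and> acyclic_edges F \<and> A0 \<subseteq> V \<and> A1 \<subseteq> V \<and> A0 \<inter> A1 = {} \<and>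
     independent_set E (A0 \<union> A1) \<and>
     (\<forall>v\<in>A0. degree F v = degree E v) \<and> (\<forall>v\<in>A1. degree F v + 1 \<ge> degree E v) \<and>
     (\<forall>e\<in>F. e \<inter> (A0 \<union> A1) \<noteq> {})"

lemma deg_nb:
  assumes "\<forall>e\<in>E. card e = 2"
  shows "degree E v = card (nb E v)"
proof -
  have "{e \<in> E. v \<in> e} = (\<lambda>u. {v,u}) ` nb E v"
  proof
    show "{e \<in> E. v \<in> e} \<subseteq> (\<lambda>u. {v,u}) ` nb E v"
    proof
      fix e assume e: "e \<in> {e \<in> E. v \<in> e}"
      have "card e = 2" using e assms by blast
      then obtain x y where "e = {x,y}" "x \<noteq> y" unfolding card_2_iff by blast
      then have "\<exists>u. e = {v,u}" using e by auto
      then obtain u where "e = {v,u}" by blast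
      then show "e \<in> (\<lambda>u. {v,u}) ` nb E v" using e unfolding nb_def by auto
    qed
  qed (auto simp: nb_def)
  moreover have "inj_on (\<lambda>u. {v,u}) (nb E v)"
    by (auto simp: inj_on_def doubleton_eq_iff)
  ultimately show ?thesis unfolding degree_def by (simp add: card_image)
qed

lemma nb_sub:
  assumes "simple_graph V E"
  shows "nb E v \<subseteq> V"
proof
  fix u assume "u \<in> nb E v"
  then have "{v,u} \<in> E" unfolding nb_def by simp
  then have "{v,u} \<subseteq> V" using assms unfolding simple_graph_def by blast
  then show "u \<in> V" by simp
qed

lemma nb_sym: "u \<in> nb E v \<longleftrightarrow> v \<in> nb E u"
  unfolding nb_def by (simp add: insert_commute)

lemma finite_nb:
  assumes "simple_graph V E"
  shows "finite (nb E v)"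
proof -
  have "finite V" using assms unfolding simple_graph_def by simp
  then show ?thesis using nb_sub[OF assms] by (rule finite_subset[rotated])
qed

lemma nb_self: assumes "simple_graph V E" shows "v \<notin> nb E v"
proof
  assume "v \<in> nb E v"
  then have "{v} \<in> E" unfolding nb_def by simp
  then have "card {v} = 2" using assms unfolding simple_graph_def by blast
  then show False by simp
qed

lemma pick2: "a \<noteq> b \<Longrightarrow> a \<noteq> v \<Longrightarrow> b \<noteq> v \<Longrightarrow> {v,a}\<in>F \<Longrightarrow> {v,b}\<in>F \<Longrightarrow> a\<in>S \<Longrightarrow> b\<in>S \<Longrightarrow>
  \<exists>a b. a\<noteq>b \<and> a\<noteq>v \<and> b\<noteq>v \<and> {v,a}\<in>F \<and> {v,b}\<in>F \<and> a\<in>S \<and> b\<in>S" by blast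

lemma cycle_nbrs:
  assumes "is_cycle F xs" "v \<in> set xs"
  shows "\<exists>a b. a \<noteq> b \<and> a \<noteq> v \<and> b \<noteq> v \<and> {v,a} \<in> F \<and> {v,b} \<in> F \<and> a \<in> set xs \<and> b \<in> set xs"
proof -
  let ?n = "length xs"
  have n: "?n \<ge> 3" and d: "distinct xs" and ed: "\<And>i. Suc i < ?n \<Longrightarrow> {xs ! i, xs ! Suc i} \<in> F"
    and lh: "{last xs, hd xs} \<in> F" using assms(1) unfolding is_cycle_def by auto
  have ne: "xs \<noteq> []" using n by auto
  have last: "last xs = xs ! (?n - 1)" using ne by (simp add: last_conv_nth)
  have hd: "hd xs = xs ! 0" using ne by (simp add: hd_conv_nth)
  obtain i where i: "i < ?n" "v = xs ! i" using assms(2) by (metis in_set_conv_nth)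
  have neq: "\<And>j k. j < ?n \<Longrightarrow> k < ?n \<Longrightarrow> j \<noteq> k \<Longrightarrow> xs ! j \<noteq> xs ! k"
    using d by (simp add: nth_eq_iff_index_eq)
  have mem: "\<And>j. j < ?n \<Longrightarrow> xs ! j \<in> set xs" by simp
  show ?thesis
  proof (cases "i = 0")
    case True
    have "{v, xs ! 1} \<in> F" using ed[of 0] n i True by simp
    moreover have "{v, xs ! (?n - 1)} \<in> F" using lh last hd i True by (simp add: insert_commute)
    moreover have "xs ! 1 \<noteq> xs ! (?n - 1)" by (rule neq) (use n in auto)
    moreover have "xs ! 1 \<noteq> v" using True i neq[of 1 i] n by auto
    moreover have "xs ! (?n - 1) \<noteq> v" using True i neq[of "?n - 1" i] n by auto
    moreover have "xs ! 1 \<in> set xs" "xs ! (?n - 1) \<in> set xs" using n by auto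
    ultimately show ?thesis by (intro exI[of _ "xs ! 1"] exI[of _ "xs ! (?n - 1)"] conjI) (assumption | rule not_sym, assumption)+
  next
    case False
    have e1: "{v, xs ! (i - 1)} \<in> F" using ed[of "i - 1"] i False by (simp add: insert_commute)
    have m1: "xs ! (i - 1) \<in> set xs" using i by auto
    have n1: "xs ! (i - 1) \<noteq> v" using False i neq[of "i - 1" i] by auto
    show ?thesis
    proof (cases "i = ?n - 1")
      case True
      have "{v, xs ! 0} \<in> F" using lh last hd i True by simp
      moreover have "xs ! (i - 1) \<noteq> xs ! 0" using n True by (intro neq) auto
      moreover have "xs ! 0 \<noteq> xs ! i" using i False n by (intro neq) auto
      then have "xs ! 0 \<noteq> v" using i by simp
      moreover have "xs ! 0 \<in> set xs" using n by (intro nth_mem) auto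
      ultimately show ?thesis using e1 m1 n1 by (intro exI[of _ "xs ! (i - 1)"] exI[of _ "xs ! 0"] conjI) (assumption | rule not_sym, assumption)+
    next
      case F2: False
      have si: "Suc i < ?n" using i(1) F2 by arith
      have f1: "{v, xs ! Suc i} \<in> F" using ed[OF si] i(2) by simp
      have f2: "xs ! (i - 1) \<noteq> xs ! Suc i" using si by (intro neq) auto
      have f3: "xs ! Suc i \<noteq> v" unfolding i(2) using si i(1) by (intro neq) auto
      have f4: "xs ! Suc i \<in> set xs" using si by (intro nth_mem)
      show ?thesis by (rule pick2[OF f2 n1 f3 e1 f1 m1 f4])
    qed
  qed
qed


lemma two_elem:
  assumes "card e = 2" "a \<in> e" "u \<in> e" "a \<noteq> u"
  shows "e = {a,u}"
proof -
  obtain x y where e: "e = {x,y}" "x \<noteq> y" using assms(1) unfolding card_2_iff by blast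
  show ?thesis using assms(2-4) unfolding e(1) by auto
qed

lemma cfg_parts:
  assumes "config V E F A0 A1"
  shows "F \<subseteq> E" "acyclic_edges F" "A0 \<subseteq> V" "A1 \<subseteq> V" "A0 \<inter> A1 = {}"
    "independent_set E (A0 \<union> A1)" "\<And>v. v\<in>A0 \<Longrightarrow> degree F v = degree E v"
    "\<And>v. v\<in>A1 \<Longrightarrow> degree F v + 1 \<ge> degree E v" "\<And>e. e\<in>F \<Longrightarrow> e \<inter> (A0 \<union> A1) \<noteq> {}"
  using assms unfolding config_def by auto

lemma sg_edge:
  assumes "simple_graph V E" "e \<in> E"
  shows "card e = 2" "e \<subseteq> V"
  using assms unfolding simple_graph_def by auto

lemma cov_in:
  assumes sg: "simple_graph V E" and cfg: "config V E F A0 A1" and u: "u \<in> e" "e \<in> F"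
  shows "u \<in> A0 \<union> A1 \<or> u \<in> NA E V (A0 \<union> A1)"
proof (cases "u \<in> A0 \<union> A1")
  case False
  have eE: "e \<in> E" using cfg_parts(1)[OF cfg] u(2) by blast
  obtain a where a: "a \<in> e" "a \<in> A0 \<union> A1" using cfg_parts(9)[OF cfg u(2)] by blast
  have "a \<noteq> u" using a False by blast
  then have "e = {a,u}" using two_elem[OF sg_edge(1)[OF sg eE] a(1) u(1)] by simp
  moreover have "u \<in> V" using sg_edge(2)[OF sg eE] u(1) by blast
  ultimately have "u \<in> NA E V (A0 \<union> A1)" unfolding NA_def using eE a(2) False by blast
  then show ?thesis by blast
qed simp

lemma ext:
  assumes sg: "simple_graph V E" and cfg: "config V E F A0 A1"
    and w: "w \<in> V" "w \<notin> A0 \<union> A1" "w \<notin> NA E V (A0 \<union> A1)"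
    and U: "U \<subseteq> nb E w" "card (U \<inter> \<Union>F) \<le> 1"
  defines "F' \<equiv> F \<union> (\<lambda>u. {w,u}) ` U"
  shows "F' \<subseteq> E" "acyclic_edges F'" "independent_set E (insert w (A0 \<union> A1))"
    "\<forall>e\<in>F'. e \<inter> insert w (A0 \<union> A1) \<noteq> {}" "degree F' w = card U"
    "\<And>a. a \<in> A0 \<union> A1 \<Longrightarrow> degree F' a = degree F a"
proof -
  let ?A = "A0 \<union> A1"
  have wF: "w \<notin> \<Union>F"
  proof
    assume "w \<in> \<Union>F"
    then obtain e where "w \<in> e" "e \<in> F" by blast
    then show False using cov_in[OF sg cfg] w by blast
  qed
  have wU: "w \<notin> U" using U(1) nb_self[OF sg] by blast
  have finU: "finite U" using finite_nb[OF sg] U(1) finite_subset by blast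
  have FE: "F \<subseteq> E" using cfg_parts(1)[OF cfg] .
  show F'E: "F' \<subseteq> E" unfolding F'_def using FE U(1) unfolding nb_def by blast
  have c2F: "\<forall>e\<in>F. card e = 2" using FE sg_edge(1)[OF sg] by blast
  have c2F': "\<forall>e\<in>F'. card e = 2" using F'E sg_edge(1)[OF sg] by blast
  have wadj: "\<And>a. a \<in> ?A \<Longrightarrow> {a,w} \<notin> E"
  proof
    fix a assume "a \<in> ?A" "{a,w} \<in> E"
    then have "w \<in> NA E V ?A" unfolding NA_def using w(1,2) by blast
    then show False using w(3) by blast
  qed
  have nbw: "nb F' w = U"
  proof
    show "nb F' w \<subseteq> U"
    proof
      fix z assume "z \<in> nb F' w"
      then have z: "{w,z} \<in> F'" unfolding nb_def by simp
      have "{w,z} \<notin> F" using wF by blast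
      then obtain u where "u \<in> U" "{w,z} = {w,u}" using z unfolding F'_def by blast
      then show "z \<in> U" using wU by (auto simp: doubleton_eq_iff)
    qed
    show "U \<subseteq> nb F' w" unfolding nb_def F'_def by blast
  qed
  have nba: "nb F' a = nb F a" if a: "a \<in> ?A" for a
  proof
    show "nb F' a \<subseteq> nb F a"
    proof
      fix z assume "z \<in> nb F' a"
      then have z: "{a,z} \<in> F'" unfolding nb_def by simp
      show "z \<in> nb F a"
      proof (rule ccontr)
        assume "z \<notin> nb F a"
        then have "{a,z} \<notin> F" unfolding nb_def by simp
        then obtain u where u: "u \<in> U" "{a,z} = {w,u}" using z unfolding F'_def by blast
        have "a \<noteq> w" using a w(2) by blast
        then have "a = u" using u(2) by (auto simp: doubleton_eq_iff)
        then have "{w,a} \<in> E" using u(1) U(1) unfolding nb_def by blast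
        then show False using wadj[OF a] by (simp add: insert_commute)
      qed
    qed
    show "nb F a \<subseteq> nb F' a" unfolding nb_def F'_def by blast
  qed
  show "degree F' w = card U" using deg_nb[OF c2F'] nbw by simp
  show "\<And>a. a \<in> ?A \<Longrightarrow> degree F' a = degree F a"
    using deg_nb[OF c2F'] deg_nb[OF c2F] nba by simp
  show "\<forall>e\<in>F'. e \<inter> insert w ?A \<noteq> {}"
    unfolding F'_def using cfg_parts(9)[OF cfg] by blast
  show "independent_set E (insert w ?A)"
    unfolding independent_set_def
  proof (intro ballI)
    fix u v assume u: "u \<in> insert w ?A" and v: "v \<in> insert w ?A"
    have ind: "\<And>u v. u \<in> ?A \<Longrightarrow> v \<in> ?A \<Longrightarrow> {u,v} \<notin> E"
      using cfg_parts(6)[OF cfg] unfolding independent_set_def by blast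
    have ww: "{w,w} \<notin> E" using nb_self[OF sg, of w] unfolding nb_def by simp
    show "{u,v} \<notin> E"
    proof (cases "u = w")
      case True
      then show ?thesis using v ww wadj by (cases "v = w") (auto simp: insert_commute)
    next
      case False
      then have uA: "u \<in> ?A" using u by blast
      then show ?thesis using v ind wadj by (cases "v = w") auto
    qed
  qed
  have noF: "\<And>e. e \<in> F' \<Longrightarrow> w \<notin> e \<Longrightarrow> e \<in> F" unfolding F'_def by blast
  have wnb: "\<And>d. {w,d} \<in> F' \<Longrightarrow> d \<noteq> w \<Longrightarrow> d \<in> U"
  proof -
    fix d assume d: "{w,d} \<in> F'" "d \<noteq> w"
    have "{w,d} \<notin> F" using wF by blast
    then obtain u where "u \<in> U" "{w,d} = {w,u}" using d(1) unfolding F'_def by blast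
    then show "d \<in> U" using d(2) by (auto simp: doubleton_eq_iff)
  qed
  have uncov: "\<And>c d. c \<notin> \<Union>F \<Longrightarrow> c \<noteq> w \<Longrightarrow> {c,d} \<in> F' \<Longrightarrow> d = w"
  proof -
    fix c d assume c: "c \<notin> \<Union>F" "c \<noteq> w" "{c,d} \<in> F'"
    have "{c,d} \<notin> F" using c(1) by blast
    then obtain u where "u \<in> U" "{c,d} = {w,u}" using c(3) unfolding F'_def by blast
    then show "d = w" using c(2) by (auto simp: doubleton_eq_iff)
  qed
  show "acyclic_edges F'"
    unfolding acyclic_edges_def
  proof
    assume "\<exists>xs. is_cycle F' xs"
    then obtain xs where cyc: "is_cycle F' xs" by blast
    have n: "length xs \<ge> 3" and d: "distinct xs"
      and ed: "\<And>i. Suc i < length xs \<Longrightarrow> {xs ! i, xs ! Suc i} \<in> F'"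
      and lh: "{last xs, hd xs} \<in> F'" using cyc unfolding is_cycle_def by auto
    show False
    proof (cases "w \<in> set xs")
      case False
      have ne: "xs \<noteq> []" using n by auto
      have "\<And>i. Suc i < length xs \<Longrightarrow> {xs ! i, xs ! Suc i} \<in> F"
      proof -
        fix i assume i: "Suc i < length xs"
        have "xs ! i \<in> set xs" "xs ! Suc i \<in> set xs" using i by simp_all
        then have "w \<notin> {xs ! i, xs ! Suc i}" using False by blast
        then show "{xs ! i, xs ! Suc i} \<in> F" using noF ed[OF i] by blast
      qed
      moreover have "{last xs, hd xs} \<in> F"
      proof -
        have "last xs \<in> set xs" "hd xs \<in> set xs" using ne by simp_all
        then have "w \<notin> {last xs, hd xs}" using False by blast
        then show ?thesis using noF lh by blast
      qed
      ultimately have "is_cycle F xs" using n d unfolding is_cycle_def by blast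
      then show False using cfg_parts(2)[OF cfg] unfolding acyclic_edges_def by blast
    next
      case True
      obtain a b where ab: "a \<noteq> b" "a \<noteq> w" "b \<noteq> w" "{w,a} \<in> F'" "{w,b} \<in> F'"
        "a \<in> set xs" "b \<in> set xs" using cycle_nbrs[OF cyc True] by blast
      have aU: "a \<in> U" using wnb ab by blast
      have bU: "b \<in> U" using wnb ab by blast
      have "\<exists>c. c \<in> U \<and> c \<notin> \<Union>F \<and> c \<in> set xs"
      proof (rule ccontr)
        assume "\<not> ?thesis"
        then have "{a,b} \<subseteq> U \<inter> \<Union>F" using aU bU ab(6,7) by blast
        then have "card {a,b} \<le> card (U \<inter> \<Union>F)" using finU by (intro card_mono) auto
        then show False using U(2) ab(1) by simp
      qed
      then obtain c where c: "c \<in> U" "c \<notin> \<Union>F" "c \<in> set xs" by blast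
      have cw: "c \<noteq> w" using c(1) wU by blast
      obtain c1 c2 where cc: "c1 \<noteq> c2" "{c,c1} \<in> F'" "{c,c2} \<in> F'"
        using cycle_nbrs[OF cyc c(3)] by blast
      have "c1 = w" using uncov[OF c(2) cw cc(2)] .
      moreover have "c2 = w" using uncov[OF c(2) cw cc(3)] .
      ultimately show False using cc(1) by simp
    qed
  qed
qed


lemma card_filter_sum:
  assumes "finite Y"
  shows "card (P \<inter> Y) = (\<Sum>y\<in>Y. if y \<in> P then 1 else 0 :: nat)"
proof -
  have "P \<inter> Y = {y\<in>Y. y \<in> P}" by blast
  then have "card (P \<inter> Y) = (\<Sum>y\<in>{y\<in>Y. y \<in> P}. 1 :: nat)" by simp
  also have "\<dots> = (\<Sum>y\<in>Y. if y \<in> P then 1 else 0 :: nat)"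
    using assms by (rule sum.inter_filter)
  finally show ?thesis .
qed

lemma dc:
  assumes "finite X" "finite Y"
  shows "(\<Sum>x\<in>X. card (nb E x \<inter> Y)) = (\<Sum>y\<in>Y. card (nb E y \<inter> X))"
proof -
  have "(\<Sum>x\<in>X. card (nb E x \<inter> Y)) = (\<Sum>x\<in>X. \<Sum>y\<in>Y. if y \<in> nb E x then 1 else 0 :: nat)"
    using card_filter_sum[OF assms(2)] by simp
  also have "\<dots> = (\<Sum>y\<in>Y. \<Sum>x\<in>X. if y \<in> nb E x then 1 else 0 :: nat)"
    by (rule sum.swap)
  also have "\<dots> = (\<Sum>y\<in>Y. \<Sum>x\<in>X. if x \<in> nb E y then 1 else 0 :: nat)"
    by (intro sum.cong refl) (subst nb_sym, rule refl)
  also have "\<dots> = (\<Sum>y\<in>Y. card (nb E y \<inter> X))"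
    using card_filter_sum[OF assms(1)] by simp
  finally show ?thesis .
qed

lemma count:
  assumes sg: "simple_graph V E" and deg: "\<forall>v\<in>V. degree E v \<le> D" and AV: "A \<subseteq> V"
    and k: "k \<ge> 1"
    and far: "\<forall>w \<in> V - A - NA E V A. k \<le> card (nb E w \<inter> NA E V A)"
  shows "k * card V \<le> (k + (k + D - 1) * D) * card A"
proof -
  define N where "N = NA E V A"
  define R where "R = V - A - N"
  have finV: "finite V" using sg unfolding simple_graph_def by simp
  have NV: "N \<subseteq> V - A" unfolding N_def NA_def by blast
  have finA: "finite A" using AV finV finite_subset by blast
  have finN: "finite N" using NV finV finite_subset by blast
  have finR: "finite R" unfolding R_def using finV by simp
  have c2: "\<forall>e\<in>E. card e = 2" using sg unfolding simple_graph_def by blast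
  have degnb: "\<And>v. v \<in> V \<Longrightarrow> card (nb E v) \<le> D" using deg deg_nb[OF c2] by simp
  define S where "S = (\<Sum>x\<in>N. card (nb E x \<inter> A))"
  have a: "card N \<le> S"
  proof -
    have "card N = (\<Sum>x\<in>N. 1)" by simp
    also have "\<dots> \<le> S" unfolding S_def
    proof (rule sum_mono)
      fix x assume x: "x \<in> N"
      then obtain a where "a \<in> A" "{a,x} \<in> E" unfolding N_def NA_def by blast
      then have "a \<in> nb E x \<inter> A" unfolding nb_def by (simp add: insert_commute)
      moreover have "finite (nb E x \<inter> A)" using finA by simp
      ultimately have "card (nb E x \<inter> A) \<noteq> 0" by auto
      then show "1 \<le> card (nb E x \<inter> A)" by simp
    qed
    finally show ?thesis .
  qed
  have b: "S \<le> D * card A"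
  proof -
    have "S = (\<Sum>a\<in>A. card (nb E a \<inter> N))" unfolding S_def by (rule dc[OF finN finA])
    also have "\<dots> \<le> (\<Sum>a\<in>A. D)"
    proof (rule sum_mono)
      fix a assume "a \<in> A"
      then have "card (nb E a) \<le> D" using degnb AV by blast
      moreover have "card (nb E a \<inter> N) \<le> card (nb E a)"
        using finite_nb[OF sg] by (intro card_mono) auto
      ultimately show "card (nb E a \<inter> N) \<le> D" by simp
    qed
    also have "\<dots> = D * card A" by simp
    finally show ?thesis .
  qed
  define T where "T = (\<Sum>x\<in>N. card (nb E x \<inter> R))"
  have c: "(\<Sum>w\<in>R. card (nb E w \<inter> N)) = T" unfolding T_def by (rule dc[OF finR finN])
  have d: "k * card R \<le> (\<Sum>w\<in>R. card (nb E w \<inter> N))"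
  proof -
    have "k * card R = (\<Sum>w\<in>R. k)" by simp
    also have "\<dots> \<le> (\<Sum>w\<in>R. card (nb E w \<inter> N))"
      by (rule sum_mono) (use far in \<open>auto simp: R_def N_def\<close>)
    finally show ?thesis .
  qed
  have e: "T + S \<le> D * card N"
  proof -
    have "T + S = (\<Sum>x\<in>N. card (nb E x \<inter> R) + card (nb E x \<inter> A))"
      unfolding T_def S_def by (simp add: sum.distrib)
    also have "\<dots> \<le> (\<Sum>x\<in>N. D)"
    proof (rule sum_mono)
      fix x assume x: "x \<in> N"
      have "card (nb E x \<inter> R) + card (nb E x \<inter> A) = card ((nb E x \<inter> R) \<union> (nb E x \<inter> A))"
        using finite_nb[OF sg] by (intro card_Un_disjoint[symmetric]) (auto simp: R_def)
      also have "\<dots> \<le> card (nb E x)"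
        using finite_nb[OF sg] by (intro card_mono) auto
      also have "\<dots> \<le> D" using degnb x NV by blast
      finally show "card (nb E x \<inter> R) + card (nb E x \<inter> A) \<le> D" .
    qed
    also have "\<dots> = D * card N" by simp
    finally show ?thesis .
  qed
  have f: "card V = card A + card N + card R"
  proof -
    have "V = A \<union> N \<union> R" using AV NV unfolding R_def by blast
    moreover have "card (A \<union> N \<union> R) = card A + card N + card R"
    proof -
      have "card (A \<union> N) = card A + card N" using finA finN NV by (intro card_Un_disjoint) auto
      moreover have "card ((A \<union> N) \<union> R) = card (A \<union> N) + card R"
        using finA finN finR by (intro card_Un_disjoint) (auto simp: R_def)
      ultimately show ?thesis by simp
    qed
    ultimately show ?thesis by simp
  qed
  have h1: "(k + D) * card N \<le> (k + D) * S" using a by (rule mult_le_mono2)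
  have h2: "(k + D - 1) * S \<le> (k + D - 1) * (D * card A)" using b by (rule mult_le_mono2)
  have h3: "(k + D) * S = (k + D - 1) * S + S" using k by (cases "k + D") auto
  have h4: "(k + D) * card N = k * card N + D * card N" by (simp add: algebra_simps)
  have h5: "k * card V = k * card A + k * card N + k * card R" using f by (simp add: algebra_simps)
  have h6: "(k + (k + D - 1) * D) * card A = k * card A + (k + D - 1) * (D * card A)"
    by (simp add: algebra_simps)
  show ?thesis using c d e h1 h2 h3 h4 h5 h6 by linarith
qed


lemma nbcov:
  assumes sg: "simple_graph V E" and cfg: "config V E F A0 A1"
    and w: "w \<in> V" "w \<notin> A0 \<union> A1" "w \<notin> NA E V (A0 \<union> A1)"
  shows "nb E w \<inter> \<Union>F \<subseteq> NA E V (A0 \<union> A1)"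
proof
  fix u assume u: "u \<in> nb E w \<inter> \<Union>F"
  then obtain e where e: "u \<in> e" "e \<in> F" by blast
  have "u \<notin> A0 \<union> A1"
  proof
    assume uA: "u \<in> A0 \<union> A1"
    have "{u,w} \<in> E" using u unfolding nb_def by (simp add: insert_commute)
    then have "w \<in> NA E V (A0 \<union> A1)" unfolding NA_def using uA w(1,2) by blast
    then show False using w(3) by blast
  qed
  then show "u \<in> NA E V (A0 \<union> A1)" using cov_in[OF sg cfg e] by blast
qed

lemma ext0:
  assumes sg: "simple_graph V E" and cfg: "config V E F A0 A1"
    and w: "w \<in> V" "w \<notin> A0 \<union> A1" "w \<notin> NA E V (A0 \<union> A1)"
    and U: "card (nb E w \<inter> \<Union>F) \<le> 1"
  shows "\<exists>F'. config V E F' (insert w A0) A1"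
proof -
  define F' where "F' = F \<union> (\<lambda>u. {w,u}) ` nb E w"
  note X = ext[OF sg cfg w subset_refl U, folded F'_def]
  have c2: "\<forall>e\<in>E. card e = 2" using sg unfolding simple_graph_def by blast
  have eq: "insert w A0 \<union> A1 = insert w (A0 \<union> A1)" by blast
  have "config V E F' (insert w A0) A1"
    unfolding config_def eq
  proof (intro conjI ballI)
    show "F' \<subseteq> E" by (rule X(1))
    show "acyclic_edges F'" by (rule X(2))
    show "independent_set E (insert w (A0 \<union> A1))" by (rule X(3))
    show "insert w A0 \<subseteq> V" "A1 \<subseteq> V" using w(1) cfg_parts[OF cfg] by auto
    show "insert w A0 \<inter> A1 = {}" using w(2) cfg_parts(5)[OF cfg] by blast
    show "\<And>e. e \<in> F' \<Longrightarrow> e \<inter> insert w (A0 \<union> A1) \<noteq> {}" using X(4) by blast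
    fix v
    show "v \<in> A1 \<Longrightarrow> degree E v \<le> degree F' v + 1" using X(6) cfg_parts(8)[OF cfg] by simp
    show "v \<in> insert w A0 \<Longrightarrow> degree F' v = degree E v"
    proof -
      assume "v \<in> insert w A0"
      then show ?thesis
      proof
        assume "v = w" then show ?thesis using X(5) deg_nb[OF c2] by simp
      next
        assume "v \<in> A0" then show ?thesis using X(6) cfg_parts(7)[OF cfg] by simp
      qed
    qed
  qed
  then show ?thesis by blast
qed

lemma ext1:
  assumes sg: "simple_graph V E" and cfg: "config V E F A0 A1"
    and w: "w \<in> V" "w \<notin> A0 \<union> A1" "w \<notin> NA E V (A0 \<union> A1)"
    and U: "card (nb E w \<inter> \<Union>F) \<le> 2"
  shows "\<exists>F'. config V E F' A0 (insert w A1)"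
proof -
  have finw: "finite (nb E w)" using finite_nb[OF sg] .
  obtain U where U1: "U \<subseteq> nb E w" and U2: "card (U \<inter> \<Union>F) \<le> 1" and U3: "card (nb E w) \<le> card U + 1"
  proof (cases "nb E w \<inter> \<Union>F = {}")
    case True
    show ?thesis by (rule that[of "nb E w"]) (use True in auto)
  next
    case False
    then obtain x where x: "x \<in> nb E w \<inter> \<Union>F" by blast
    have "(nb E w - {x}) \<inter> \<Union>F = (nb E w \<inter> \<Union>F) - {x}" by blast
    moreover have "card ((nb E w \<inter> \<Union>F) - {x}) = card (nb E w \<inter> \<Union>F) - 1"
      using x finw by (intro card_Diff_singleton) auto
    ultimately have "card ((nb E w - {x}) \<inter> \<Union>F) \<le> 1" using U by simp
    moreover have "card (nb E w - {x}) = card (nb E w) - 1"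
      using x finw by (intro card_Diff_singleton) auto
    ultimately show ?thesis by (intro that[of "nb E w - {x}"]) auto
  qed
  define F' where "F' = F \<union> (\<lambda>u. {w,u}) ` U"
  note X = ext[OF sg cfg w U1 U2, folded F'_def]
  have c2: "\<forall>e\<in>E. card e = 2" using sg unfolding simple_graph_def by blast
  have eq: "A0 \<union> insert w A1 = insert w (A0 \<union> A1)" by blast
  have "config V E F' A0 (insert w A1)"
    unfolding config_def eq
  proof (intro conjI ballI)
    show "F' \<subseteq> E" by (rule X(1))
    show "acyclic_edges F'" by (rule X(2))
    show "independent_set E (insert w (A0 \<union> A1))" by (rule X(3))
    show "insert w A1 \<subseteq> V" "A0 \<subseteq> V" using w(1) cfg_parts[OF cfg] by auto
    show "A0 \<inter> insert w A1 = {}" using w(2) cfg_parts(5)[OF cfg] by blast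
    show "\<And>e. e \<in> F' \<Longrightarrow> e \<inter> insert w (A0 \<union> A1) \<noteq> {}" using X(4) by blast
    fix v
    show "v \<in> A0 \<Longrightarrow> degree F' v = degree E v" using X(6) cfg_parts(7)[OF cfg] by simp
    show "v \<in> insert w A1 \<Longrightarrow> degree E v \<le> degree F' v + 1"
    proof -
      assume "v \<in> insert w A1"
      then show ?thesis
      proof
        assume "v = w" then show ?thesis using X(5) deg_nb[OF c2] U3 by simp
      next
        assume "v \<in> A1" then show ?thesis using X(6) cfg_parts(8)[OF cfg] by simp
      qed
    qed
  qed
  then show ?thesis by blast
qed

lemma config_empty: "config V E {} {} {}"
proof -
  have "acyclic_edges {}"
    unfolding acyclic_edges_def is_cycle_def
  proof
    assume "\<exists>xs. 3 \<le> length xs \<and> distinct xs \<and> (\<forall>i. Suc i < length xs \<longrightarrow> {xs ! i, xs ! Suc i} \<in> {}) \<and>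
        {last xs, hd xs} \<in> {}"
    then show False by simp
  qed
  then show ?thesis unfolding config_def independent_set_def by simp
qed

lemma lin2: "(x::real) \<le> a0 / 2 \<Longrightarrow> y \<le> (a0 + a1) / 2 \<Longrightarrow> z = x + y \<Longrightarrow> z \<le> a0 + a1 / 2"
  by (simp add: field_simps)

lemma final_arith:
  fixes n a0 a1 D :: real
  assumes D: "D \<ge> 0" and h1: "2 * n \<le> (D^2 + D + 2) * a0" and h2: "3 * n \<le> (D^2 + 2*D + 3) * (a0 + a1)"
  shows "(1 / (D ^ 2 + D + 2) + 3 / (2 * (D ^ 2 + 2 * D + 3))) * n \<le> a0 + a1 / 2"
proof -
  have D2: "D^2 \<ge> 0" by simp
  have p: "D^2 + D + 2 > 0" using D D2 by linarith
  have q: "D^2 + 2*D + 3 > 0" using D D2 by linarith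
  have "n / (D^2 + D + 2) \<le> a0 / 2" using h1 p by (simp add: divide_simps mult.commute)
  moreover have "3 * n / (2 * (D^2 + 2*D + 3)) \<le> (a0 + a1) / 2"
  proof -
    have "3 * n / (D^2 + 2*D + 3) \<le> a0 + a1" using h2 q by (simp add: pos_divide_le_eq mult.commute)
    then have m: "(3 * n / (D^2 + 2*D + 3)) / 2 \<le> (a0 + a1) / 2" by (rule divide_right_mono) simp
    have eq: "3 * n / (2 * (D^2 + 2*D + 3)) = (3 * n / (D^2 + 2*D + 3)) / 2" by simp
    show ?thesis unfolding eq by (rule m)
  qed
  moreover have eq: "(1 / (D ^ 2 + D + 2) + 3 / (2 * (D ^ 2 + 2 * D + 3))) * n =
      n / (D^2 + D + 2) + 3 * n / (2 * (D^2 + 2*D + 3))" by (simp add: algebra_simps)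
  ultimately show ?thesis by (rule lin2)
qed

theorem lemma5p2:
  fixes V :: "'a set" and E :: "'a set set"
  assumes "simple_graph V E"
    and "connected_graph V E"
    and "max_degree V E \<ge> 1"
  shows "\<exists>F A0 A1. forest_in V E F \<and> A0 \<subseteq> V \<and> A1 \<subseteq> V \<and> A0 \<inter> A1 = {} \<and>
           independent_set E (A0 \<union> A1) \<and>
           (\<forall>v\<in>A0. degree F v = degree E v) \<and>
           (\<forall>v\<in>A1. degree F v + 1 \<ge> degree E v) \<and>
           real (card A0) + real (card A1) / 2 \<ge> gamma (max_degree V E) * real (card V)"
proof -
  note sg = assms(1)
  define D where "D = max_degree V E"
  have finV: "finite V" using sg unfolding simple_graph_def by simp
  have deg: "\<forall>v\<in>V. degree E v \<le> D"
    unfolding D_def max_degree_def using finV by (intro ballI Max_ge) auto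
  have "\<exists>x. config V E (fst x) (snd x) {} \<and>
      (\<forall>y. config V E (fst y) (snd y) {} \<longrightarrow> card (snd y) \<le> card (snd x))"
  proof (rule Lattices_Big.ex_has_greatest_nat[where k = "({}, {})" and b = "card V + 1"])
    show "config V E (fst ({}, {})) (snd ({}, {})) {}" using config_empty by simp
    show "\<forall>y. config V E (fst y) (snd y) {} \<longrightarrow> card (snd y) < card V + 1"
    proof (intro allI impI)
      fix y assume "config V E (fst y) (snd y) {}"
      then have "snd y \<subseteq> V" using cfg_parts(3) by blast
      then have "card (snd y) \<le> card V" by (rule card_mono[OF finV])
      then show "card (snd y) < card V + 1" by simp
    qed
  qed
  then obtain F1 A0 where c1: "config V E F1 A0 {}"
    and m1: "\<And>F A. config V E F A {} \<Longrightarrow> card A \<le> card A0" by auto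
  have A0V: "A0 \<subseteq> V" using cfg_parts(3)[OF c1] .
  have finA0: "finite A0" using A0V finV finite_subset by blast
  have far1: "\<forall>w \<in> V - A0 - NA E V A0. 2 \<le> card (nb E w \<inter> NA E V A0)"
  proof (intro ballI)
    fix w assume w: "w \<in> V - A0 - NA E V A0"
    show "2 \<le> card (nb E w \<inter> NA E V A0)"
    proof (rule ccontr)
      assume "\<not> ?thesis"
      then have le: "card (nb E w \<inter> NA E V A0) \<le> 1" by simp
      have w': "w \<in> V" "w \<notin> A0 \<union> {}" "w \<notin> NA E V (A0 \<union> {})" using w by auto
      have "nb E w \<inter> \<Union>F1 \<subseteq> nb E w \<inter> NA E V A0" using nbcov[OF sg c1 w'] by auto
      then have "card (nb E w \<inter> \<Union>F1) \<le> 1"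
        using le card_mono[OF finite_Int[OF disjI1[OF finite_nb[OF sg]]]] by (meson le_trans)
      then obtain F' where "config V E F' (insert w A0) {}" using ext0[OF sg c1 w'] by blast
      then have "card (insert w A0) \<le> card A0" by (rule m1)
      then show False using w finA0 by simp
    qed
  qed
  have bound1: "2 * card V \<le> (2 + (2 + D - 1) * D) * card A0"
    by (rule count[OF sg deg A0V _ far1]) simp
  have "\<exists>x. config V E (fst x) A0 (snd x) \<and>
      (\<forall>y. config V E (fst y) A0 (snd y) \<longrightarrow> card (snd y) \<le> card (snd x))"
  proof (rule Lattices_Big.ex_has_greatest_nat[where k = "(F1, {})" and b = "card V + 1"])
    show "config V E (fst (F1, {})) A0 (snd (F1, {}))" using c1 by simp
    show "\<forall>y. config V E (fst y) A0 (snd y) \<longrightarrow> card (snd y) < card V + 1"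
    proof (intro allI impI)
      fix y assume "config V E (fst y) A0 (snd y)"
      then have "snd y \<subseteq> V" using cfg_parts(4) by blast
      then have "card (snd y) \<le> card V" by (rule card_mono[OF finV])
      then show "card (snd y) < card V + 1" by simp
    qed
  qed
  then obtain F2 A1 where c2: "config V E F2 A0 A1"
    and m2: "\<And>F A. config V E F A0 A \<Longrightarrow> card A \<le> card A1" by auto
  have A1V: "A1 \<subseteq> V" using cfg_parts(4)[OF c2] .
  have finA1: "finite A1" using A1V finV finite_subset by blast
  have far2: "\<forall>w \<in> V - (A0 \<union> A1) - NA E V (A0 \<union> A1). 3 \<le> card (nb E w \<inter> NA E V (A0 \<union> A1))"
  proof (intro ballI)
    fix w assume w: "w \<in> V - (A0 \<union> A1) - NA E V (A0 \<union> A1)"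
    show "3 \<le> card (nb E w \<inter> NA E V (A0 \<union> A1))"
    proof (rule ccontr)
      assume "\<not> ?thesis"
      then have le: "card (nb E w \<inter> NA E V (A0 \<union> A1)) \<le> 2" by simp
      have w': "w \<in> V" "w \<notin> A0 \<union> A1" "w \<notin> NA E V (A0 \<union> A1)" using w by auto
      have "nb E w \<inter> \<Union>F2 \<subseteq> nb E w \<inter> NA E V (A0 \<union> A1)" using nbcov[OF sg c2 w'] by auto
      then have "card (nb E w \<inter> \<Union>F2) \<le> 2"
        using le card_mono[OF finite_Int[OF disjI1[OF finite_nb[OF sg]]]] by (meson le_trans)
      then obtain F' where "config V E F' A0 (insert w A1)" using ext1[OF sg c2 w'] by blast
      then have "card (insert w A1) \<le> card A1" by (rule m2)
      then show False using w finA1 by simp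
    qed
  qed
  have bound2: "3 * card V \<le> (3 + (3 + D - 1) * D) * card (A0 \<union> A1)"
    by (rule count[OF sg deg _ _ far2]) (use A0V A1V in auto)
  have cu: "card (A0 \<union> A1) = card A0 + card A1"
    using finA0 finA1 cfg_parts(5)[OF c2] by (intro card_Un_disjoint) auto
  have r1: "2 * real (card V) \<le> ((real D)^2 + real D + 2) * real (card A0)"
  proof -
    have "real (2 * card V) \<le> real ((2 + (2 + D - 1) * D) * card A0)" using bound1 by (rule of_nat_mono)
    moreover have "(2 + D - 1) = D + 1" by simp
    ultimately show ?thesis by (simp add: power2_eq_square algebra_simps)
  qed
  have r2: "3 * real (card V) \<le> ((real D)^2 + 2 * real D + 3) * (real (card A0) + real (card A1))"
  proof -
    have "real (3 * card V) \<le> real ((3 + (3 + D - 1) * D) * (card A0 + card A1))"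
      using bound2 cu by (simp only: of_nat_mono)
    moreover have "(3 + D - 1) = D + 2" by simp
    ultimately show ?thesis by (simp add: power2_eq_square algebra_simps)
  qed
  have fin: "gamma D * real (card V) \<le> real (card A0) + real (card A1) / 2"
    unfolding gamma_def by (rule final_arith[OF _ r1 r2]) simp
  have "forest_in V E F2" unfolding forest_in_def using cfg_parts(1,2)[OF c2] by blast
  moreover have "\<forall>v\<in>A0. degree F2 v = degree E v" using cfg_parts(7)[OF c2] by blast
  moreover have "\<forall>v\<in>A1. degree F2 v + 1 \<ge> degree E v" using cfg_parts(8)[OF c2] by blast
  ultimately show ?thesis using fin A0V A1V cfg_parts(5,6)[OF c2] unfolding D_def
    by (intro exI[of _ F2] exI[of _ A0] exI[of _ A1]) simp
qed

end
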